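(* Assume (A). Let $H\in(1,1+\lambda)$ be the unique abscissa with $f(H)=\mu H$. Let $M>2\mu/\sigma^2$, and let $A,b>0$ satisfy $$A>\max\Big\{M+H,\ \tfrac{f(0)}{c}M+H,\ \tfrac{\sigma^2M^2}{\sigma^2M-2\mu},\ \tfrac{f(0)}{c}\cdot\tfrac{\sigma^2M^2}{\sigma^2M-2\mu}\Big\},$$ $$\tfrac1M\max\Big\{\ln\tfrac{A}{A-M},\ \ln\tfrac{A}{A-\frac{f(0)}{c}M}\Big\}<b<\tfrac1M\min\Big\{\ln\tfrac{A}{H},\ \ln\big(\tfrac{\sigma^2}{2\mu}M\big)\Big\}.$$ Define $\underline\psi(x)=1-e^{-x}$ and $\overline\psi(x)=\frac AM\big(1-e^{-M(x\wedge b)}\big)$ for $x\ge0$. Then $\underline\psi$ is a viscosity subsolution and $\overline\psi$ is a viscosity supersolution of the ODE (E) on $[0,\infty)$, and $\underline\psi\le\overline\psi$ on $[0,\infty)$.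
   Context: Constants $\mu\in\mathbb R$, $\sigma>0$, $c>0$, $a>0$, $\lambda>0$; standing assumption (A): $a>\max\{1,2\mu\}$ and $\mu>\max\{c,\sigma^2/2\}$. $f(z)=\mu z+\lambda\ln\big[\lambda(e^{\frac{a}{\lambda}(1-z)}-1)/(1-z)\big]$ for $z\ne1$, $f(1)=\mu+\lambda\ln a$. The ODE (E) is $\frac12\sigma^2v''(x)+f(v'(x))-cv(x)=0$ on $[0,\infty)$ with $v(0)=0$. A function $u$ that is upper (resp. lower) semicontinuous on $[0,\infty)$ is a viscosity subsolution (resp. supersolution) of (E) if $u(0)=0$ and for every $x\in(0,\infty)$ and every $\varphi\in C^2(\mathbb R)$ with $0=(u-\varphi)(x)=\max_{y\in(0,\infty)}(u-\varphi)(y)$ (resp. $\min$), one has $\frac12\sigma^2\varphi''(x)+f(\varphi'(x))-cu(x)\ge0$ (resp. $\le0$). A viscosity solution is a continuous function that is both. *)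

theory Defs
  imports "HOL-Analysis.Analysis"
begin

definition fE :: "real \<Rightarrow> real \<Rightarrow> real \<Rightarrow> real \<Rightarrow> real" where
  "fE mu lam a z =
     (if z = 1 then mu + lam * ln a
      else mu * z + lam * ln (lam * (exp (a / lam * (1 - z)) - 1) / (1 - z)))"

definition usc_on :: "real set \<Rightarrow> (real \<Rightarrow> real) \<Rightarrow> bool" where
  "usc_on S u \<longleftrightarrow> (\<forall>x\<in>S. \<forall>e>0. \<exists>d>0. \<forall>y\<in>S. \<bar>y - x\<bar> < d \<longrightarrow> u y < u x + e)"

definition lsc_on :: "real set \<Rightarrow> (real \<Rightarrow> real) \<Rightarrow> bool" where
  "lsc_on S u \<longleftrightarrow> (\<forall>x\<in>S. \<forall>e>0. \<exists>d>0. \<forall>y\<in>S. \<bar>y - x\<bar> < d \<longrightarrow> u y > u x - e)"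

definition C2_with :: "(real \<Rightarrow> real) \<Rightarrow> (real \<Rightarrow> real) \<Rightarrow> (real \<Rightarrow> real) \<Rightarrow> bool" where
  "C2_with phi phi' phi'' \<longleftrightarrow>
     (\<forall>x. (phi has_real_derivative phi' x) (at x)) \<and>
     (\<forall>x. (phi' has_real_derivative phi'' x) (at x)) \<and>
     continuous_on UNIV phi''"

definition visc_subsolution :: "real \<Rightarrow> real \<Rightarrow> (real \<Rightarrow> real) \<Rightarrow> (real \<Rightarrow> real) \<Rightarrow> bool" where
  "visc_subsolution sig c F u \<longleftrightarrow>
     usc_on {0..} u \<and> u 0 = 0 \<and>
     (\<forall>x>0. \<forall>phi phi' phi''. C2_with phi phi' phi'' \<and> u x - phi x = 0 \<and>
        (\<forall>y>0. u y - phi y \<le> u x - phi x) \<longrightarrow>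
        sig\<^sup>2 / 2 * phi'' x + F (phi' x) - c * u x \<ge> 0)"

definition visc_supersolution :: "real \<Rightarrow> real \<Rightarrow> (real \<Rightarrow> real) \<Rightarrow> (real \<Rightarrow> real) \<Rightarrow> bool" where
  "visc_supersolution sig c F u \<longleftrightarrow>
     lsc_on {0..} u \<and> u 0 = 0 \<and>
     (\<forall>x>0. \<forall>phi phi' phi''. C2_with phi phi' phi'' \<and> u x - phi x = 0 \<and>
        (\<forall>y>0. u y - phi y \<ge> u x - phi x) \<longrightarrow>
        sig\<^sup>2 / 2 * phi'' x + F (phi' x) - c * u x \<le> 0)"

end

theory Submission imports Defs begin
lemma second_deriv_min:
  fixes g g' g'' :: "real \<Rightarrow> real"
  assumes d1: "\<And>y. (g has_real_derivative g' y) (at y)"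
    and d2: "\<And>y. (g' has_real_derivative g'' y) (at y)"
    and "d > 0" and mn: "\<And>y. \<bar>y - x\<bar> < d \<Longrightarrow> g x \<le> g y"
  shows "g' x = 0 \<and> g'' x \<ge> 0"
proof -
  have g0: "g' x = 0"
    by (rule DERIV_local_min[OF d1 \<open>d>0\<close>]) (auto intro: mn simp: abs_minus_commute)
  moreover have "g'' x \<ge> 0"
  proof (rule ccontr)
    assume "\<not> g'' x \<ge> 0"
    then obtain e where e: "e > 0" "\<And>h. h > 0 \<Longrightarrow> h < e \<Longrightarrow> g' (x+h) < g' x"
      using DERIV_neg_dec_right[OF d2, of x] by auto
    define h where "h = min d e / 2"
    have h: "h > 0" "h < d" "h < e" using e \<open>d>0\<close> by (auto simp: h_def)
    obtain z where z: "x < z" "z < x + h" "g (x+h) - g x = (x + h - x) * g' z"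
      using MVT2[of x "x+h" g g'] h d1 by auto
    have "g' z < 0" using e(2)[of "z - x"] z h g0 by auto
    then have "h * g' z < 0" using h(1) by (simp add: mult_pos_neg)
    then have "g (x+h) < g x" using z by simp
    moreover have "g x \<le> g (x+h)" using mn[of "x+h"] h by auto
    ultimately show False by simp
  qed
  ultimately show ?thesis by simp
qed

lemma exp_half_bound:
  fixes t :: real assumes "t \<ge> 0" shows "t * exp (t/2) \<le> exp t - 1"
proof -
  define k where "k = (\<lambda>u::real. exp u - exp (-u) - 2*u)"
  have "k 0 \<le> k (t/2)"
  proof (rule DERIV_nonneg_imp_nondecreasing[of 0 "t/2" k])
    show "0 \<le> t/2" using assms by simp
    fix u :: real
    have e1: "exp(u/2)*exp(u/2) = exp u" "exp(-(u/2))*exp(-(u/2)) = exp(-u)" "exp(u/2)*exp(-(u/2)) = 1"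
      by (simp_all flip: exp_add)
    have "exp u + exp (-u) - 2 = (exp (u/2) - exp (-(u/2)))^2"
      unfolding power2_eq_square by (simp add: algebra_simps e1)
    hence "exp u + exp (-u) - 2 \<ge> 0" by (metis zero_le_power2)
    moreover have "((\<lambda>u. exp u - exp (-u) - 2*u) has_real_derivative (exp u + exp (-u) - 2)) (at u)"
      by (auto intro!: derivative_eq_intros)
    ultimately show "\<exists>y. (k has_real_derivative y) (at u) \<and> y \<ge> 0" unfolding k_def by blast
  qed
  hence "t \<le> exp (t/2) - exp (-t/2)" by (simp add: k_def)
  hence "t * exp (t/2) \<le> (exp (t/2) - exp (-t/2)) * exp (t/2)" by (simp add: mult_right_mono)
  also have "\<dots> = exp t - 1" by (simp add: algebra_simps flip: exp_add)
  finally show ?thesis .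
qed

lemma R_decr:
  fixes u1 u2 :: real assumes "0 < u1" "u1 \<le> u2"
  shows "(1 - exp (-u2)) / u2 \<le> (1 - exp (-u1)) / u1"
proof -
  define t where "t = u1 / u2"
  have t: "0 \<le> t" "t \<le> 1" using assms by (auto simp: t_def)
  have "exp ((1 - t) *\<^sub>R 0 + t *\<^sub>R (-u2)) \<le> (1 - t) * exp 0 + t * exp (-u2)"
    using convex_onD[OF exp_convex t, of 0 "-u2"] by simp
  moreover have "(1 - t) *\<^sub>R 0 + t *\<^sub>R (-u2) = -u1" using assms by (simp add: t_def)
  ultimately have "exp (-u1) \<le> 1 - t + t * exp (-u2)" by simp
  hence "t * (1 - exp (-u2)) \<le> 1 - exp (-u1)" by (simp add: algebra_simps)
  thus ?thesis using assms by (simp add: t_def field_simps)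
qed

lemma fE_arg:
  fixes lam a w :: real assumes "lam > 0" "w \<noteq> 1"
  shows "lam * (exp (a / lam * (1 - w)) - 1) / (1 - w) = a * (exp (a/lam*(1-w)) - 1) / (a/lam*(1-w))"
  using assms by (cases "a = 0") (auto simp: field_simps)

lemma f_lower:
  fixes mu lam a p :: real
  assumes "lam > 0" "a > 2*mu" "a > 1" "mu > 0" "0 < p" "p < 1"
  shows "fE mu lam a p > mu"
proof -
  define t where "t = a/lam*(1-p)"
  have t: "t > 0" using assms by (simp add: t_def)
  have arg: "lam * (exp t - 1) / (1 - p) = a * ((exp t - 1) / t)"
    using fE_arg[of lam p a] assms by (simp add: t_def)
  have "exp (t/2) \<le> (exp t - 1) / t"
    using exp_half_bound[of t] t by (simp add: pos_le_divide_eq mult.commute)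
  hence "a * exp (t/2) \<le> a * ((exp t - 1) / t)"
    using assms by (intro mult_left_mono) auto
  moreover have "0 < a * exp (t/2)" using assms by simp
  ultimately have "ln (a * exp (t/2)) \<le> ln (lam * (exp t - 1) / (1 - p))"
    using arg by (metis ln_le_cancel_iff order_less_le_trans)
  moreover have "ln (a * exp (t/2)) = ln a + t/2" using assms by (simp add: ln_mult)
  moreover have "ln a > 0" using assms by simp
  ultimately have "ln (lam * (exp t - 1) / (1 - p)) > t/2" by linarith
  hence "lam * ln (lam * (exp t - 1) / (1 - p)) > lam * (t/2)" using assms by simp
  moreover have "lam * (t/2) = a * (1-p) / 2" using assms by (simp add: t_def)
  moreover have "a * (1-p)/2 > mu * (1-p)" using assms by (simp add: mult_strict_right_mono)
  ultimately have "mu * p + lam * ln (lam * (exp t - 1) / (1 - p)) > mu" by (simp add: algebra_simps)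
  thus ?thesis using assms by (simp add: fE_def t_def)
qed

lemma f_upper:
  fixes mu lam a H z :: real
  assumes "lam > 0" "a > 1" "H > 1" "fE mu lam a H = mu * H" "z \<ge> H"
  shows "fE mu lam a z \<le> mu * z"
proof -
  define Q where "Q = (\<lambda>w. a * ((1 - exp (-(a/lam*(w-1)))) / (a/lam*(w-1))))"
  have key: "lam * (exp (a / lam * (1 - w)) - 1) / (1 - w) = Q w"
    if "w > 1" for w
  proof -
    define v where "v = a/lam*(1-w)"
    have e: "a/lam*(w-1) = -v" unfolding v_def by (simp add: right_diff_distrib)
    have "(1 - exp v) / (-v) = (exp v - 1) / v" by (simp add: minus_divide_left)
    thus ?thesis using fE_arg[of lam w a] assms that unfolding e Q_def by (simp add: v_def)
  qed
  have upos: "a/lam*(w-1) > 0" if "w > 1" for w using assms that by simp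
  have pos: "Q w > 0" if "w > 1" for w
  proof -
    have "exp (-(a/lam*(w-1))) < 1" using upos[OF that] by simp
    hence "1 - exp (-(a/lam*(w-1))) > 0" by simp
    thus ?thesis unfolding Q_def using upos[OF that] assms that by (intro mult_pos_pos divide_pos_pos) auto
  qed
  have fw: "fE mu lam a w = mu * w + lam * ln (Q w)" if "w > 1" for w
    using key[OF that] that unfolding fE_def by simp
  have "ln (Q H) = 0"
    using assms(4) fw[of H] assms by simp
  hence QH: "Q H = 1"
    using pos[of H] assms by simp
  have "(1 - exp (-(a/lam*(z-1)))) / (a/lam*(z-1)) \<le> (1 - exp (-(a/lam*(H-1)))) / (a/lam*(H-1))"
  proof (rule R_decr)
    show "0 < a/lam*(H-1)" using upos assms by simp
    show "a/lam*(H-1) \<le> a/lam*(z-1)" using assms by (intro mult_left_mono) auto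
  qed
  hence "Q z \<le> Q H" unfolding Q_def using assms by (intro mult_left_mono) auto
  hence "ln (Q z) \<le> 0" using QH pos[of z] assms by simp
  thus ?thesis using fw[of z] assms by (simp add: mult_nonneg_nonpos)
qed

lemma cont_semi:
  assumes "continuous_on S u"
  shows "usc_on S u \<and> lsc_on S u"
proof -
  have *: "\<forall>x\<in>S. \<forall>e>0. \<exists>d>0. \<forall>y\<in>S. \<bar>y - x\<bar> < d \<longrightarrow> \<bar>u y - u x\<bar> < e"
    using assms unfolding continuous_on_iff dist_real_def by blast
  show ?thesis unfolding usc_on_def lsc_on_def
  proof (intro conjI ballI allI impI)
    fix x e assume "x \<in> S" "(e::real) > 0"
    then obtain d where d: "d > 0" "\<forall>y\<in>S. \<bar>y - x\<bar> < d \<longrightarrow> \<bar>u y - u x\<bar> < e" using * by blast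
    show "\<exists>d>0. \<forall>y\<in>S. \<bar>y - x\<bar> < d \<longrightarrow> u y < u x + e"
      using d by (intro exI[of _ d]) (auto simp: abs_less_iff)
    show "\<exists>d>0. \<forall>y\<in>S. \<bar>y - x\<bar> < d \<longrightarrow> u y > u x - e"
      using d by (intro exI[of _ d]) (auto simp: abs_less_iff)
  qed
qed

lemma bexp:
  fixes A K y :: real
  assumes "A - K > 0" "ln (A / (A - K)) < y"
  shows "K < A * (1 - exp (- y))"
proof -
  have "A / (A - K) < exp y"
  proof (cases "A / (A - K) > 0")
    case True thus ?thesis using assms(2) by (metis exp_less_cancel_iff exp_ln)
  next
    case False thus ?thesis by (meson exp_gt_zero less_le_trans not_le)
  qed
  hence "A < exp y * (A - K)" using assms(1) by (simp add: divide_less_eq mult.commute)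
  hence "A * exp (-y) < exp y * (A - K) * exp (-y)" by (simp add: mult_strict_right_mono)
  also have "\<dots> = A - K" by (simp add: exp_minus field_simps)
  finally show ?thesis by (simp add: algebra_simps)
qed

lemma sub_part:
  fixes mu sigma c a lam :: real
  assumes "sigma > 0" "c > 0" "lam > 0" "a > 1" "a > 2*mu" "mu > c" "mu > sigma\<^sup>2/2"
  shows "visc_subsolution sigma c (fE mu lam a) (\<lambda>x. 1 - exp (- x))"
  unfolding visc_subsolution_def
proof (intro conjI allI impI)
  show "usc_on {0..} (\<lambda>x. 1 - exp (- x))"
  proof -
    have "continuous_on {0..} (\<lambda>x::real. 1 - exp (- x))" by (intro continuous_intros)
    thus ?thesis using cont_semi by blast
  qed
  show "1 - exp (- 0) = (0::real)" by simp
  fix x :: real and phi phi' phi'' :: "real \<Rightarrow> real"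
  assume x: "x > 0"
    and H: "C2_with phi phi' phi'' \<and> 1 - exp (- x) - phi x = 0 \<and>
        (\<forall>y>0. 1 - exp (- y) - phi y \<le> 1 - exp (- x) - phi x)"
  have d1: "((\<lambda>y. phi y - (1 - exp (-y))) has_real_derivative (phi' y - exp (-y))) (at y)" for y
    using H unfolding C2_with_def by (auto intro!: derivative_eq_intros)
  have d2: "((\<lambda>y. phi' y - exp (-y)) has_real_derivative (phi'' y + exp (-y))) (at y)" for y
    using H unfolding C2_with_def by (auto intro!: derivative_eq_intros)
  have "phi' x - exp (-x) = 0 \<and> phi'' x + exp (-x) \<ge> 0"
  proof (rule second_deriv_min[OF d1 d2 x])
    fix y assume "\<bar>y - x\<bar> < x"
    hence "y > 0" by auto
    thus "phi x - (1 - exp (- x)) \<le> phi y - (1 - exp (- y))" using H by force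
  qed
  hence ph: "phi' x = exp (-x)" "phi'' x \<ge> - exp (-x)" by auto
  define p where "p = exp (-x)"
  have p: "0 < p" "p < 1" using x by (auto simp: p_def)
  have mu0: "mu > 0" using assms by simp
  have f: "fE mu lam a p > mu" using f_lower[OF assms(3) assms(5) assms(4) mu0 p] .
  have "sigma\<^sup>2/2 * phi'' x \<ge> sigma\<^sup>2/2 * (- p)"
    using ph p_def by (intro mult_left_mono) auto
  moreover have "mu * p \<ge> sigma\<^sup>2/2 * p" using p assms by (intro mult_right_mono) auto
  moreover have "mu * (1-p) \<ge> c * (1 - p)" using p assms by (intro mult_right_mono) auto
  ultimately show "0 \<le> sigma\<^sup>2 / 2 * phi'' x + fE mu lam a (phi' x) - c * (1 - exp (- x))"
    using f ph unfolding p_def[symmetric] by (simp add: algebra_simps)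
qed

lemma super_part:
  fixes mu sigma c a lam H M A b :: real
  assumes sp: "sigma > 0" and cp: "c > 0" and lp: "lam > 0" and a1: "a > 1" and Mp: "M > 0"
    and sM: "sigma\<^sup>2 * M > 2 * mu" and Ap: "A > 0" and bp: "b > 0" and H1: "H > 1"
    and HE: "fE mu lam a H = mu * H" and HA: "H < A * exp (- M * b)"
    and f0: "fE mu lam a 0 < c * (A / M * (1 - exp (- M * b)))"
  shows "visc_supersolution sigma c (fE mu lam a) (\<lambda>x. A / M * (1 - exp (- M * min x b)))"
  unfolding visc_supersolution_def
proof (intro conjI allI impI)
  define P where "P = (\<lambda>x. A / M * (1 - exp (- M * min x b)))"
  define Pt where "Pt = (\<lambda>x. A / M * (1 - exp (- M * x)))"
  have "continuous_on {0..} (\<lambda>x::real. A / M * (1 - exp (- M * min x b)))" by (intro continuous_intros)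
  thus "lsc_on {0..} (\<lambda>x. A / M * (1 - exp (- M * min x b)))" using cont_semi by blast
  show "A / M * (1 - exp (- M * min 0 b)) = 0" using bp by simp
  have dPt: "(Pt has_real_derivative A * exp (- M * y)) (at y)" for y
    unfolding Pt_def using Mp by (auto intro!: derivative_eq_intros simp: field_simps)
  have dPt2: "((\<lambda>y. A * exp (- M * y)) has_real_derivative - A * M * exp (- M * y)) (at y)" for y
    by (auto intro!: derivative_eq_intros simp: field_simps)
  have PPt: "P y = Pt y" if "y \<le> b" for y using that by (simp add: P_def Pt_def)
  have Pb: "P y = Pt b" if "y \<ge> b" for y using that by (simp add: P_def Pt_def)
  fix x :: real and phi phi' phi'' :: "real \<Rightarrow> real"
  assume x: "x > 0"
    and HH: "C2_with phi phi' phi'' \<and> A / M * (1 - exp (- M * min x b)) - phi x = 0 \<and>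
        (\<forall>y>0. A / M * (1 - exp (- M * min y b)) - phi y \<ge> A / M * (1 - exp (- M * min x b)) - phi x)"
  have C2: "\<And>y. (phi has_real_derivative phi' y) (at y)" "\<And>y. (phi' has_real_derivative phi'' y) (at y)"
    using HH unfolding C2_with_def by auto
  have mn: "P y - phi y \<ge> P x - phi x" if "y > 0" for y using HH that unfolding P_def by blast
  have Px: "A / M * (1 - exp (- M * min x b)) = P x" by (simp add: P_def)
  have Ptb: "Pt b > 0" using Mp Ap bp by (simp add: Pt_def)
  consider "x < b" | "x = b" | "x > b" by linarith
  then show "sigma\<^sup>2 / 2 * phi'' x + fE mu lam a (phi' x) - c * (A / M * (1 - exp (- M * min x b))) \<le> 0"
  proof cases
    case 1
    have g1: "((\<lambda>y. Pt y - phi y) has_real_derivative (A * exp (- M * y) - phi' y)) (at y)" for y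
      using dPt C2 by (auto intro!: derivative_eq_intros)
    have g2: "((\<lambda>y. A * exp (- M * y) - phi' y) has_real_derivative (- A * M * exp (- M * y) - phi'' y)) (at y)" for y
      using dPt2 C2 by (auto intro!: derivative_eq_intros)
    have g3: "min x (b - x) > 0" using 1 x by simp
    have g4: "Pt x - phi x \<le> Pt y - phi y" if "\<bar>y - x\<bar> < min x (b - x)" for y
    proof -
      from that have y: "y > 0" "y \<le> b" by auto
      show ?thesis using mn[OF y(1)] PPt[OF y(2)] PPt[of x] 1 by simp
    qed
    have "(A * exp (- M * x) - phi' x) = 0 \<and> - A * M * exp (- M * x) - phi'' x \<ge> 0"
      using second_deriv_min[OF g1 g2 g3 g4] by blast
    hence c: "A * exp (- M * x) - phi' x = 0" "- A * M * exp (- M * x) - phi'' x \<ge> 0" by auto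
    have e: "- M * (A * exp (- M * x)) = - A * M * exp (- M * x)" by simp
    have ph: "phi' x = A * exp (- M * x)" "phi'' x \<le> - M * (A * exp (- M * x))"
      using c e by linarith+
    define q where "q = A * exp (- M * x)"
    have "exp (- M * b) \<le> exp (- M * x)" using 1 Mp by simp
    hence "A * exp (- M * b) \<le> q" unfolding q_def using Ap by (intro mult_left_mono) auto
    hence qH: "q \<ge> H" using HA by simp
    have fq: "fE mu lam a q \<le> mu * q" by (rule f_upper[OF lp a1 H1 HE qH])
    have Pxpos: "P x \<ge> 0" using x Mp Ap 1 PPt[of x] unfolding Pt_def by simp
    have "sigma\<^sup>2/2 * phi'' x \<le> sigma\<^sup>2/2 * (- M * q)"
      using ph q_def by (intro mult_left_mono) auto
    moreover have "(mu - sigma\<^sup>2 * M / 2) * q \<le> 0"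
      using sM qH H1 by (intro mult_nonpos_nonneg) auto
    moreover have "c * P x \<ge> 0" using cp Pxpos by simp
    ultimately show ?thesis using fq ph unfolding Px q_def[symmetric] by (simp add: algebra_simps)
  next
    case 2
    have "phi' b \<le> 0"
    proof (rule ccontr)
      assume "\<not> phi' b \<le> 0"
      then obtain d where d: "d > 0" "\<And>h. h > 0 \<Longrightarrow> h < d \<Longrightarrow> phi b < phi (b + h)"
        using DERIV_pos_inc_right[OF C2(1), of b] by auto
      have "phi b < phi (b + d/2)" using d by auto
      moreover have "P (b + d/2) - phi (b + d/2) \<ge> P b - phi b" using mn[of "b + d/2"] 2 d bp by simp
      moreover have "P (b + d/2) = P b" using Pb[of "b + d/2"] Pb[of b] d by simp
      ultimately show False by simp
    qed
    moreover have "A * exp (- M * b) > 0" using Ap by simp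
    ultimately have pos: "A * exp (- M * b) - phi' b > 0" by linarith
    obtain d where d: "d > 0" "\<And>h. h > 0 \<Longrightarrow> h < d \<Longrightarrow> Pt (b - h) - phi (b - h) < Pt b - phi b"
      using DERIV_pos_inc_left[OF DERIV_diff[OF dPt C2(1)] pos] by auto
    define h where "h = min d b / 2"
    have h: "h > 0" "h < d" "h < b" using d bp by (auto simp: h_def)
    have "Pt (b - h) - phi (b - h) < Pt b - phi b" using d h by auto
    moreover have "P (b - h) - phi (b - h) \<ge> P b - phi b" using mn[of "b - h"] 2 h by simp
    moreover have "P (b - h) = Pt (b - h)" "P b = Pt b" using PPt h by auto
    ultimately show ?thesis by simp
  next
    case 3
    have g1: "((\<lambda>y. - phi y) has_real_derivative (- phi' y)) (at y)" for y
      using C2 by (auto intro!: derivative_eq_intros)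
    have g2: "((\<lambda>y. - phi' y) has_real_derivative (- phi'' y)) (at y)" for y
      using C2 by (auto intro!: derivative_eq_intros)
    have g3: "x - b > 0" using 3 by simp
    have g4: "- phi x \<le> - phi y" if "\<bar>y - x\<bar> < x - b" for y
    proof -
      from that have y: "y > 0" "y \<ge> b" using bp by auto
      show ?thesis using mn[OF y(1)] Pb[OF y(2)] Pb[of x] 3 by simp
    qed
    have "(- phi' x) = 0 \<and> - phi'' x \<ge> 0"
      using second_deriv_min[OF g1 g2 g3 g4] by blast
    hence ph: "phi' x = 0" "phi'' x \<le> 0" by auto
    have "sigma\<^sup>2/2 * phi'' x \<le> 0" using ph by (simp add: mult_nonneg_nonpos)
    moreover have "P x = A / M * (1 - exp (- M * b))" using Pb[of x] 3 by (simp add: Pt_def)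
    ultimately show ?thesis using f0 ph unfolding Px by simp
  qed
qed
theorem proposition3p4:
  fixes mu sigma c a lam H M A b :: real
  assumes sigma_pos: "sigma > 0" and c_pos: "c > 0" and a_pos: "a > 0" and lam_pos: "lam > 0"
    and A1: "a > max 1 (2 * mu)" and A2: "mu > max c (sigma\<^sup>2 / 2)"
    and H_int: "1 < H" "H < 1 + lam" and H_eq: "fE mu lam a H = mu * H"
    and H_unique: "\<forall>h. 1 < h \<and> h < 1 + lam \<and> fE mu lam a h = mu * h \<longrightarrow> h = H"
    and M_gt: "M > 2 * mu / sigma\<^sup>2"
    and A_pos: "A > 0" and b_pos: "b > 0"
    and A_gt: "A > max (max (M + H) (fE mu lam a 0 / c * M + H))
                     (max (sigma\<^sup>2 * M\<^sup>2 / (sigma\<^sup>2 * M - 2 * mu))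
                          (fE mu lam a 0 / c * (sigma\<^sup>2 * M\<^sup>2 / (sigma\<^sup>2 * M - 2 * mu))))"
    and b_gt: "1 / M * max (ln (A / (A - M))) (ln (A / (A - fE mu lam a 0 / c * M))) < b"
    and b_lt: "b < 1 / M * min (ln (A / H)) (ln (sigma\<^sup>2 / (2 * mu) * M))"
  shows "visc_subsolution sigma c (fE mu lam a) (\<lambda>x. 1 - exp (- x)) \<and>
         visc_supersolution sigma c (fE mu lam a) (\<lambda>x. A / M * (1 - exp (- M * min x b))) \<and>
         (\<forall>x\<ge>0. 1 - exp (- x) \<le> A / M * (1 - exp (- M * min x b)))"
proof -
  have c_mu: "c < mu" and s_mu: "sigma\<^sup>2 / 2 < mu" using A2 by auto
  have a1: "a > 1" and a2: "a > 2 * mu" using A1 by auto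
  have mu0: "mu > 0" using c_mu c_pos by simp
  have s2: "sigma\<^sup>2 > 0" using sigma_pos by simp
  have "2 * mu / sigma\<^sup>2 > 0" using mu0 s2 by simp
  hence Mp: "M > 0" using M_gt by linarith
  have sM: "sigma\<^sup>2 * M > 2 * mu" using M_gt s2 by (simp add: divide_less_eq mult.commute)
  have H0: "H > 0" using H_int by simp
  have Mb: "M * b < min (ln (A / H)) (ln (sigma\<^sup>2 / (2 * mu) * M))"
    using b_lt Mp by (simp add: field_simps)
  hence "M * b < ln (A / H)" by simp
  hence "exp (M * b) < A / H" using A_pos H0 by (metis exp_less_cancel_iff exp_ln divide_pos_pos)
  hence "H * exp (M * b) < A" using H0 by (simp add: less_divide_eq mult.commute)
  hence "H < A / exp (M * b)" by (simp add: pos_less_divide_eq)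
  hence HA: "H < A * exp (- M * b)" by (simp add: exp_minus divide_inverse)
  have Mb2: "max (ln (A / (A - M))) (ln (A / (A - fE mu lam a 0 / c * M))) < M * b"
    using b_gt Mp by (simp add: field_simps)
  have "fE mu lam a 0 / c * M < A * (1 - exp (- (M * b)))"
    using A_gt H0 Mb2 by (intro bexp) auto
  hence "fE mu lam a 0 * M < c * (A * (1 - exp (- (M * b))))" using c_pos by (simp add: field_simps)
  hence f0: "fE mu lam a 0 < c * (A / M * (1 - exp (- M * b)))" using Mp by (simp add: field_simps)
  have "M < A * (1 - exp (- (M * b)))"
    using A_gt H0 Mb2 by (intro bexp) auto
  hence Pb1: "1 < A / M * (1 - exp (- M * b))" using Mp by (simp add: field_simps)
  have sub: "visc_subsolution sigma c (fE mu lam a) (\<lambda>x. 1 - exp (- x))"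
    using sub_part[OF sigma_pos c_pos lam_pos a1 a2 c_mu s_mu] .
  have sup: "visc_supersolution sigma c (fE mu lam a) (\<lambda>x. A / M * (1 - exp (- M * min x b)))"
    using super_part[OF sigma_pos c_pos lam_pos a1 Mp sM A_pos b_pos H_int(1) H_eq HA f0] .
  have cmp: "1 - exp (- x) \<le> A / M * (1 - exp (- M * min x b))" if x: "x \<ge> 0" for x
  proof (cases "x \<le> b")
    case True
    define k where "k = (\<lambda>y. A / M * (1 - exp (- M * y)) - (1 - exp (- y)))"
    have "k 0 \<le> k x"
    proof (rule DERIV_nonneg_imp_nondecreasing[of 0 x k])
      show "0 \<le> x" using x .
      fix y assume y: "0 \<le> y" "y \<le> x"
      have "(k has_real_derivative A * exp (- M * y) - exp (- y)) (at y)"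
        unfolding k_def using Mp by (auto intro!: derivative_eq_intros simp: field_simps)
      moreover have "exp (- y) \<le> 1" using y by simp
      moreover have "exp (- M * b) \<le> exp (- M * y)" using y True Mp by simp
      hence "A * exp (- M * b) \<le> A * exp (- M * y)" using A_pos by (intro mult_left_mono) auto
      ultimately have "(k has_real_derivative A * exp (- M * y) - exp (- y)) (at y)"
        "A * exp (- M * y) - exp (- y) \<ge> 0" using HA H_int by linarith+
      thus "\<exists>d. (k has_real_derivative d) (at y) \<and> d \<ge> 0" by blast
    qed
    thus ?thesis using True by (simp add: k_def)
  next
    case False
    have "exp (- x) > 0" by simp
    moreover have "A / M * (1 - exp (- M * min x b)) = A / M * (1 - exp (- M * b))" using False by simp
    ultimately show ?thesis using Pb1 by linarith
  qed
  show ?thesis using sub sup cmp by blast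
qed

end
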